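(* Let $\mathbb{T}$ be a time scale, $f:\mathbb{T}\to\mathbb{R}$, and $t\in\mathbb{T}_\kappa$. Let $\alpha\in\,]0,1]$ and $A=\,]0,1]\cap\{1/q: q \text{ an odd positive integer}\}$. Then: (i) If $\alpha\in A$, $t$ is left-dense, and $f$ is nabla fractional differentiable of order $\alpha$ at $t$, then $f$ is continuous at $t$. (ii) If $\alpha\in\,]0,1]\setminus A$, $t$ is left-dense, and $f$ is nabla fractional differentiable of order $\alpha$ at $t$, then $f$ is right-continuous at $t$. (iii) If $f$ is continuous at $t$ and $t$ is left-scattered, then $f$ is nabla fractional differentiable of order $\alpha$ at $t$ with $$f^{\nabla^\alpha}(t)=\frac{f(t)-f^\rho(t)}{[t-\rho(t)]^\alpha}.$$ (iv) If $\alpha\in A$ and $t$ is left-dense, then $f$ is nabla fractional differentiable of order $\alpha$ at $t$ if and only if the limit $\lim_{s\to t}\frac{f(s)-f(t)}{(s-t)^\alpha}$ exists as a finite number; in this case $f^{\nabla^\alpha}(t)=\lim_{s\to t}\frac{f(s)-f(t)}{(s-t)^\alpha}$. (v) If $\alpha\in\,]0,1]\setminus A$ and $t$ is left-dense, then $f$ is nabla fractional differentiable of order $\alpha$ at $t$ if and only if the limit $\lim_{s\to t^+}\frac{f(s)-f(t)}{(s-t)^\alpha}$ exists as a finite number; in this case $f^{\nabla^\alpha}(t)=\lim_{s\to t^+}\frac{f(s)-f(t)}{(s-t)^\alpha}$. (vi) If $f$ is nabla fractional differentiable of order $\alpha$ at $t$, then $f(t)=f^\rho(t)+[t-\rho(t)]^\alpha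 f^{\nabla^\alpha}(t)$.
   Context: A time scale $\mathbb{T}$ is a nonempty closed subset of $\mathbb{R}$ with the topology induced from $\mathbb{R}$. The backward jump operator is $\rho(t)=\sup\{s\in\mathbb{T}: s<t\}$ (with $\sup\emptyset=\inf\mathbb{T}$), the forward jump operator is $\sigma(t)=\inf\{s\in\mathbb{T}:s>t\}$ (with $\inf\emptyset=\sup\mathbb{T}$). A point $t$ is left-dense if $\rho(t)=t$ and left-scattered if $\rho(t)<t$. $\mathbb{T}_\kappa=\mathbb{T}\setminus\{\inf\mathbb{T}\}$ if $\inf\mathbb{T}$ is finite and right-scattered ($\sigma(\inf\mathbb{T})>\inf\mathbb{T}$), and $\mathbb{T}_\kappa=\mathbb{T}$ otherwise. $f^\rho=f\circ\rho$. For $\alpha=1/q$ with $q$ odd, $x^\alpha$ denotes the real $q$-th root, defined for all real $x$. Nabla fractional derivative: for $\alpha\in]0,1]$ and $t\in\mathbb{T}_\kappa$, $f^{\nabla^\alpha}(t)$ is the real number (if it exists) such that for every $\varepsilon>0$ there is $\delta>0$ with $$\big|[f(s)-f^\rho(t)]-f^{\nabla^\alpha}(t)[s-\rho(t)]^\alpha\big|\le\varepsilon|s-\rho(t)|^\alpha$$ for all $s\in\,]t-\delta,t+\delta[\,\cap\mathbb{T}$ when $\alpha\in A$, respectively for all $s\in[t,t+\delta[\,\cap\mathbb{T}$ when $\alpha\notin A$. If it exists, $f$ is called nabla fractional differentiable of order $\alpha$ at $t$. Limits $s\to t$ are taken over $s\in\mathbb{T}$, $s\neq t$. *)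

theory Defs
  imports "HOL-Analysis.Analysis"
begin

definition time_scale :: "real set \<Rightarrow> bool" where
  "time_scale T \<longleftrightarrow> T \<noteq> {} \<and> closed T"

definition bjump :: "real set \<Rightarrow> real \<Rightarrow> real" where
  "bjump T t = (if {s\<in>T. s < t} = {} then Inf T else Sup {s\<in>T. s < t})"

definition fjump :: "real set \<Rightarrow> real \<Rightarrow> real" where
  "fjump T t = (if {s\<in>T. s > t} = {} then Sup T else Inf {s\<in>T. s > t})"

definition left_dense :: "real set \<Rightarrow> real \<Rightarrow> bool" where
  "left_dense T t \<longleftrightarrow> bjump T t = t"

definition left_scattered :: "real set \<Rightarrow> real \<Rightarrow> bool" where
  "left_scattered T t \<longleftrightarrow> bjump T t < t"

definition T_kappa :: "real set \<Rightarrow> real set" where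
  "T_kappa T = (if bdd_below T \<and> fjump T (Inf T) > Inf T then T - {Inf T} else T)"

definition setA :: "real set" where
  "setA = {a. 0 < a \<and> a \<le> 1 \<and> (\<exists>q::nat. odd q \<and> a = 1 / real q)}"

text \<open>x^alpha: for alpha = 1/q in A the real (odd) q-th root, defined for all real x;
  otherwise the usual real power (only used for x \<ge> 0).\<close>
definition frpow :: "real \<Rightarrow> real \<Rightarrow> real" where
  "frpow \<alpha> x = (if \<alpha> \<in> setA then root (THE q. odd q \<and> \<alpha> = 1 / real q) x else x powr \<alpha>)"

definition has_nabla_fderiv ::
    "real set \<Rightarrow> real \<Rightarrow> (real \<Rightarrow> real) \<Rightarrow> real \<Rightarrow> real \<Rightarrow> bool" where
  "has_nabla_fderiv T \<alpha> f t D \<longleftrightarrow> t \<in> T_kappa T \<and>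
     (\<forall>\<epsilon>>0. \<exists>\<delta>>0. \<forall>s\<in>T.
        (if \<alpha> \<in> setA then t - \<delta> < s \<and> s < t + \<delta> else t \<le> s \<and> s < t + \<delta>) \<longrightarrow>
        \<bar>(f s - f (bjump T t)) - D * frpow \<alpha> (s - bjump T t)\<bar>
          \<le> \<epsilon> * \<bar>s - bjump T t\<bar> powr \<alpha>)"

definition nabla_fdifferentiable ::
    "real set \<Rightarrow> real \<Rightarrow> (real \<Rightarrow> real) \<Rightarrow> real \<Rightarrow> bool" where
  "nabla_fdifferentiable T \<alpha> f t \<longleftrightarrow> (\<exists>D. has_nabla_fderiv T \<alpha> f t D)"

end

theory Submission
  imports Defs
begin


lemma setA_root:
  assumes "\<alpha> \<in> setA"
  shows "\<exists>q. odd q \<and> \<alpha> = 1 / real q \<and> frpow \<alpha> = root q"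
proof -
  obtain q :: nat where q: "odd q" "\<alpha> = 1 / real q" using assms unfolding setA_def by blast
  have "(THE q. odd q \<and> \<alpha> = 1 / real q) = q"
  proof (rule the_equality)
    fix q' assume "odd q' \<and> \<alpha> = 1 / real q'"
    then have "odd q'" "1 / real q' = 1 / real q" using q by auto
    then show "q' = q" using q(1) by (metis divide_cancel_left of_nat_eq_iff one_neq_zero)
  qed (use q in auto)
  then show ?thesis using q assms by (intro exI[of _ q]) (auto simp: frpow_def fun_eq_iff)
qed

lemma frpow_abs:
  assumes "\<alpha> \<in> setA \<or> 0 \<le> x" "0 < \<alpha>"
  shows "\<bar>frpow \<alpha> x\<bar> = \<bar>x\<bar> powr \<alpha>"
proof (cases "\<alpha> \<in> setA")
  case True
  then obtain q where q: "odd q" "\<alpha> = 1 / real q" "frpow \<alpha> = root q" using setA_root by blast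
  have qp: "0 < q" using q(1) by (cases q) auto
  have "\<bar>root q x\<bar> = root q \<bar>x\<bar>" using real_root_abs[OF qp] by simp
  also have "\<dots> = \<bar>x\<bar> powr (1 / real q)" using root_powr_inverse[OF qp, of "\<bar>x\<bar>"] by simp
  finally show ?thesis using q by simp
next
  case False
  then show ?thesis using assms by (simp add: frpow_def)
qed

lemma frpow_zero: "0 < \<alpha> \<Longrightarrow> frpow \<alpha> 0 = 0"
  using frpow_abs[of \<alpha> 0] by simp

lemma bjump_le:
  assumes "t \<in> T"
  shows "bjump T t \<le> t"
proof (cases "{s\<in>T. s < t} = {}")
  case True
  then have "bdd_below T" by (auto intro!: bdd_belowI[of _ t] simp: not_less)
  then show ?thesis using True assms by (simp add: bjump_def cInf_lower)
next
  case False
  then have "bjump T t = Sup {s\<in>T. s < t}" unfolding bjump_def by (simp only: if_False)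
  also have "\<dots> \<le> t" using False by (intro cSup_least) auto
  finally show ?thesis .
qed

lemma quot_le:
  fixes a F D e :: real
  assumes "F \<noteq> 0"
  shows "\<bar>a - D * F\<bar> \<le> e * \<bar>F\<bar> \<longleftrightarrow> \<bar>a / F - D\<bar> \<le> e"
proof -
  have "a / F - D = (a - D * F) / F" using assms by (simp add: field_simps)
  then have "\<bar>a / F - D\<bar> = \<bar>a - D * F\<bar> / \<bar>F\<bar>" by (simp add: abs_divide)
  then show ?thesis using assms by (simp add: pos_divide_le_eq)
qed

lemma deriv_limit:
  assumes ld: "bjump T t = t" and tk: "t \<in> T_kappa T" and a: "0 < \<alpha>"
  shows "has_nabla_fderiv T \<alpha> f t D \<longleftrightarrow>
    ((\<lambda>s. (f s - f t) / frpow \<alpha> (s - t)) \<longlongrightarrow> D)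
       (at t within (if \<alpha> \<in> setA then T else T \<inter> {t<..}))"
    (is "?L \<longleftrightarrow> (?q \<longlongrightarrow> D) (at t within ?S)")
proof -
  have Fpos: "\<bar>frpow \<alpha> (s - t)\<bar> = \<bar>s - t\<bar> powr \<alpha> \<and> frpow \<alpha> (s - t) \<noteq> 0"
    if "s \<in> ?S" "s \<noteq> t" for s
  proof -
    have "\<alpha> \<in> setA \<or> 0 \<le> s - t" using that by (auto split: if_splits)
    from frpow_abs[OF this a] that show ?thesis by auto
  qed
  show ?thesis
  proof
    assume L: ?L
    show "(?q \<longlongrightarrow> D) (at t within ?S)"
      unfolding Lim_within
    proof (intro allI impI)
      fix e :: real assume e: "0 < e"
      from L e obtain d where d: "d > 0" and
        H: "\<forall>s\<in>T. (if \<alpha> \<in> setA then t - d < s \<and> s < t + d else t \<le> s \<and> s < t + d) \<longrightarrow>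
          \<bar>(f s - f t) - D * frpow \<alpha> (s - t)\<bar> \<le> e/2 * \<bar>s - t\<bar> powr \<alpha>"
        using mp[OF spec[OF conjunct2[OF L[unfolded has_nabla_fderiv_def ld]], of "e/2"]] e
        by (metis half_gt_zero)
      show "\<exists>d>0. \<forall>s\<in>?S. 0 < dist s t \<and> dist s t < d \<longrightarrow> dist (?q s) D < e"
      proof (intro exI[of _ d] conjI ballI impI d)
        fix s assume s: "s \<in> ?S" "0 < dist s t \<and> dist s t < d"
        then have st: "s \<noteq> t" by auto
        have sT: "s \<in> T" using s by (auto split: if_splits)
        have "(if \<alpha> \<in> setA then t - d < s \<and> s < t + d else t \<le> s \<and> s < t + d)"
          using s by (auto simp: dist_real_def split: if_splits)
        with H sT have "\<bar>(f s - f t) - D * frpow \<alpha> (s - t)\<bar> \<le> e/2 * \<bar>frpow \<alpha> (s - t)\<bar>"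
          using Fpos[OF s(1) st] by auto
        then have "\<bar>?q s - D\<bar> \<le> e/2" using quot_le Fpos[OF s(1) st] by blast
        then show "dist (?q s) D < e" using e by (simp add: dist_real_def)
      qed
    qed
  next
    assume R: "(?q \<longlongrightarrow> D) (at t within ?S)"
    show ?L
      unfolding has_nabla_fderiv_def ld
    proof (intro conjI tk allI impI)
      fix e :: real assume e: "0 < e"
      from R e obtain d where d: "d > 0" and
        H: "\<forall>s\<in>?S. 0 < dist s t \<and> dist s t < d \<longrightarrow> dist (?q s) D < e"
        unfolding Lim_within by blast
      show "\<exists>d>0. \<forall>s\<in>T. (if \<alpha> \<in> setA then t - d < s \<and> s < t + d else t \<le> s \<and> s < t + d) \<longrightarrow>
          \<bar>(f s - f t) - D * frpow \<alpha> (s - t)\<bar> \<le> e * \<bar>s - t\<bar> powr \<alpha>"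
      proof (intro exI[of _ d] conjI ballI impI d)
        fix s assume sT: "s \<in> T" and r: "(if \<alpha> \<in> setA then t - d < s \<and> s < t + d else t \<le> s \<and> s < t + d)"
        show "\<bar>(f s - f t) - D * frpow \<alpha> (s - t)\<bar> \<le> e * \<bar>s - t\<bar> powr \<alpha>"
        proof (cases "s = t")
          case True then show ?thesis using frpow_zero[OF a] by simp
        next
          case False
          have sS: "s \<in> ?S" using sT r False by (auto split: if_splits)
          have "0 < dist s t \<and> dist s t < d" using r False by (auto simp: dist_real_def split: if_splits)
          with H sS have "\<bar>?q s - D\<bar> \<le> e" by (auto simp: dist_real_def)
          then have "\<bar>(f s - f t) - D * frpow \<alpha> (s - t)\<bar> \<le> e * \<bar>frpow \<alpha> (s - t)\<bar>"
            using quot_le Fpos[OF sS False] by blast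
          then show ?thesis using Fpos[OF sS False] by simp
        qed
      qed
    qed
  qed
qed

lemma le_eps_zero:
  fixes x c :: real
  assumes "\<forall>e>0. x \<le> e * c" "0 \<le> c"
  shows "x \<le> 0"
proof (rule ccontr)
  assume "\<not> x \<le> 0"
  then have x: "x > 0" by simp
  define e where "e = x / (2 * (c + 1))"
  have e: "e > 0" using x assms(2) by (simp add: e_def)
  have "e * c < x"
  proof -
    have "e * c \<le> e * (c + 1)" using e by simp
    also have "\<dots> = x / 2" using assms(2) by (simp add: e_def field_simps)
    finally show ?thesis using x by simp
  qed
  with assms(1) e show False by force
qed

lemma cont_part:
  assumes ld: "bjump T t = t" and D: "has_nabla_fderiv T \<alpha> f t D" and a: "0 < \<alpha>"
  shows "continuous (at t within (if \<alpha> \<in> setA then T else T \<inter> {t..})) f"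
    (is "continuous (at t within ?S) f")
  unfolding continuous_within_eps_delta
proof (intro allI impI)
  fix e :: real assume e: "0 < e"
  obtain d where d: "d > 0" and
    H: "\<forall>s\<in>T. (if \<alpha> \<in> setA then t - d < s \<and> s < t + d else t \<le> s \<and> s < t + d) \<longrightarrow>
          \<bar>(f s - f t) - D * frpow \<alpha> (s - t)\<bar> \<le> 1 * \<bar>s - t\<bar> powr \<alpha>"
    using mp[OF spec[OF conjunct2[OF D[unfolded has_nabla_fderiv_def ld]], of 1]] by (metis zero_less_one)
  define C where "C = \<bar>D\<bar> + 1"
  have C: "C > 0" by (simp add: C_def)
  define r where "r = (e / C) powr (1 / \<alpha>)"
  have r: "r > 0" using e C by (simp add: r_def)
  have rp: "r powr \<alpha> = e / C" using e C a by (simp add: r_def powr_powr)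
  show "\<exists>d>0. \<forall>s\<in>?S. dist s t < d \<longrightarrow> dist (f s) (f t) < e"
  proof (intro exI[of _ "min d r"] conjI ballI impI)
    show "min d r > 0" using d r by simp
    fix s assume s: "s \<in> ?S" "dist s t < min d r"
    have sT: "s \<in> T" using s by (auto split: if_splits)
    have rng: "(if \<alpha> \<in> setA then t - d < s \<and> s < t + d else t \<le> s \<and> s < t + d)"
      using s by (auto simp: dist_real_def split: if_splits)
    have "\<alpha> \<in> setA \<or> 0 \<le> s - t" using s by (auto split: if_splits)
    from frpow_abs[OF this a] have F: "\<bar>frpow \<alpha> (s - t)\<bar> = \<bar>s - t\<bar> powr \<alpha>" .
    from H sT rng have h: "\<bar>(f s - f t) - D * frpow \<alpha> (s - t)\<bar> \<le> \<bar>s - t\<bar> powr \<alpha>" by auto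
    have "\<bar>D * frpow \<alpha> (s - t)\<bar> \<le> \<bar>D\<bar> * \<bar>s - t\<bar> powr \<alpha>" using F by (simp add: abs_mult)
    with h have "\<bar>f s - f t\<bar> \<le> C * \<bar>s - t\<bar> powr \<alpha>" by (simp add: C_def algebra_simps)
    moreover have "\<bar>s - t\<bar> powr \<alpha> < r powr \<alpha>"
      using s(2) a by (intro powr_less_mono2) (auto simp: dist_real_def)
    ultimately have "\<bar>f s - f t\<bar> < C * (e / C)" using C rp
      by (metis mult_strict_left_mono order_le_less_trans)
    then show "dist (f s) (f t) < e" using C by (simp add: dist_real_def)
  qed
qed

lemma frpow_tendsto:
  assumes "0 < c" "0 < \<alpha>"
  shows "((\<lambda>s. frpow \<alpha> (s - r)) \<longlongrightarrow> frpow \<alpha> c) (at (r + c) within T)"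
proof (cases "\<alpha> \<in> setA")
  case True
  then obtain q where q: "frpow \<alpha> = root q" using setA_root by blast
  have "((\<lambda>s. s - r) \<longlongrightarrow> c) (at (r + c) within T)"
    by (intro tendsto_eq_intros) auto
  then show ?thesis unfolding q by (rule tendsto_real_root)
next
  case False
  have "((\<lambda>s. (s - r) powr \<alpha>) \<longlongrightarrow> c powr \<alpha>) (at (r + c) within T)"
    using assms by (intro tendsto_intros tendsto_eq_intros) auto
  then show ?thesis using False by (simp add: frpow_def)
qed

lemma scattered_part:
  assumes tT: "t \<in> T" and tk: "t \<in> T_kappa T" and ls: "bjump T t < t"
    and cont: "continuous (at t within T) f" and a: "0 < \<alpha>"
  shows "has_nabla_fderiv T \<alpha> f t ((f t - f (bjump T t)) / frpow \<alpha> (t - bjump T t))"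
proof -
  define r where "r = bjump T t"
  define c where "c = t - r"
  have c: "c > 0" using ls by (simp add: r_def c_def)
  have tc: "t = r + c" by (simp add: c_def)
  have Fc: "\<bar>frpow \<alpha> c\<bar> = c powr \<alpha>" using frpow_abs[of \<alpha> c] c a by simp
  then have Fc0: "frpow \<alpha> c \<noteq> 0" using c by auto
  define D where "D = (f t - f r) / frpow \<alpha> c"
  have DF: "D * frpow \<alpha> c = f t - f r" using Fc0 by (simp add: D_def)
  show ?thesis
    unfolding has_nabla_fderiv_def r_def[symmetric] c_def[symmetric] D_def[symmetric]
  proof (intro conjI tk allI impI)
    fix e :: real assume e: "0 < e"
    have ft: "(f \<longlongrightarrow> f t) (at t within T)" using cont by (simp add: continuous_within)
    have "((\<lambda>s. \<bar>(f s - f r) - D * frpow \<alpha> (s - r)\<bar> - e * \<bar>s - r\<bar> powr \<alpha>)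
        \<longlongrightarrow> \<bar>(f t - f r) - D * frpow \<alpha> c\<bar> - e * \<bar>c\<bar> powr \<alpha>) (at t within T)"
      using ft frpow_tendsto[OF c a, of r T] c unfolding tc[symmetric]
      by (intro tendsto_intros tendsto_eq_intros) (auto simp: tc)
    moreover have "\<bar>(f t - f r) - D * frpow \<alpha> c\<bar> - e * \<bar>c\<bar> powr \<alpha> < 0"
      using DF e c by simp
    ultimately have "eventually (\<lambda>s. \<bar>(f s - f r) - D * frpow \<alpha> (s - r)\<bar> - e * \<bar>s - r\<bar> powr \<alpha> < 0)
        (at t within T)" by (rule order_tendstoD(2))
    then obtain d where d: "d > 0" and
      H: "\<forall>s\<in>T. s \<noteq> t \<and> dist s t < d \<longrightarrow>
          \<bar>(f s - f r) - D * frpow \<alpha> (s - r)\<bar> - e * \<bar>s - r\<bar> powr \<alpha> < 0"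
      unfolding eventually_at by blast
    show "\<exists>d>0. \<forall>s\<in>T. (if \<alpha> \<in> setA then t - d < s \<and> s < t + d else t \<le> s \<and> s < t + d) \<longrightarrow>
          \<bar>(f s - f r) - D * frpow \<alpha> (s - r)\<bar> \<le> e * \<bar>s - r\<bar> powr \<alpha>"
    proof (intro exI[of _ d] conjI ballI impI d)
      fix s assume sT: "s \<in> T" and rng: "(if \<alpha> \<in> setA then t - d < s \<and> s < t + d else t \<le> s \<and> s < t + d)"
      show "\<bar>(f s - f r) - D * frpow \<alpha> (s - r)\<bar> \<le> e * \<bar>s - r\<bar> powr \<alpha>"
      proof (cases "s = t")
        case True
        then show ?thesis using DF e by (simp add: c_def)
      next
        case False
        have "dist s t < d" using rng by (auto simp: dist_real_def split: if_splits)
        with H sT False show ?thesis by force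
      qed
    qed
  qed
qed


theorem theorem3p3:
  fixes T :: "real set" and f :: "real \<Rightarrow> real" and t \<alpha> :: real
  assumes ts: "time_scale T"
    and tk: "t \<in> T_kappa T"
    and \<alpha>: "0 < \<alpha>" "\<alpha> \<le> 1"
  shows
    "(\<alpha> \<in> setA \<and> left_dense T t \<and> nabla_fdifferentiable T \<alpha> f t
        \<longrightarrow> continuous (at t within T) f)
   \<and> (\<alpha> \<notin> setA \<and> left_dense T t \<and> nabla_fdifferentiable T \<alpha> f t
        \<longrightarrow> continuous (at t within (T \<inter> {t..})) f)
   \<and> (continuous (at t within T) f \<and> left_scattered T t
        \<longrightarrow> has_nabla_fderiv T \<alpha> f t
              ((f t - f (bjump T t)) / frpow \<alpha> (t - bjump T t)))
   \<and> (\<alpha> \<in> setA \<and> left_dense T t \<longrightarrow>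
        (nabla_fdifferentiable T \<alpha> f t \<longleftrightarrow>
           (\<exists>L. ((\<lambda>s. (f s - f t) / frpow \<alpha> (s - t)) \<longlongrightarrow> L) (at t within T)))
      \<and> (\<forall>D. has_nabla_fderiv T \<alpha> f t D \<longrightarrow>
           ((\<lambda>s. (f s - f t) / frpow \<alpha> (s - t)) \<longlongrightarrow> D) (at t within T)))
   \<and> (\<alpha> \<notin> setA \<and> left_dense T t \<longrightarrow>
        (nabla_fdifferentiable T \<alpha> f t \<longleftrightarrow>
           (\<exists>L. ((\<lambda>s. (f s - f t) / frpow \<alpha> (s - t)) \<longlongrightarrow> L) (at t within (T \<inter> {t<..}))))
      \<and> (\<forall>D. has_nabla_fderiv T \<alpha> f t D \<longrightarrow>
           ((\<lambda>s. (f s - f t) / frpow \<alpha> (s - t)) \<longlongrightarrow> D) (at t within (T \<inter> {t<..}))))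
   \<and> (\<forall>D. has_nabla_fderiv T \<alpha> f t D \<longrightarrow>
        f t = f (bjump T t) + frpow \<alpha> (t - bjump T t) * D)"
  proof -
  have tT: "t \<in> T" using tk by (auto simp: T_kappa_def split: if_splits)
  have vi: "\<forall>D. has_nabla_fderiv T \<alpha> f t D \<longrightarrow>
        f t = f (bjump T t) + frpow \<alpha> (t - bjump T t) * D"
  proof (intro allI impI)
    fix D assume H: "has_nabla_fderiv T \<alpha> f t D"
    let ?x = "\<bar>(f t - f (bjump T t)) - D * frpow \<alpha> (t - bjump T t)\<bar>"
    have "\<forall>e>0. ?x \<le> e * \<bar>t - bjump T t\<bar> powr \<alpha>"
    proof (intro allI impI)
      fix e :: real assume e: "0 < e"
      obtain d where d: "d > 0" and
        H': "\<forall>s\<in>T. (if \<alpha> \<in> setA then t - d < s \<and> s < t + d else t \<le> s \<and> s < t + d) \<longrightarrow>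
          \<bar>(f s - f (bjump T t)) - D * frpow \<alpha> (s - bjump T t)\<bar> \<le> e * \<bar>s - bjump T t\<bar> powr \<alpha>"
        using mp[OF spec[OF conjunct2[OF H[unfolded has_nabla_fderiv_def]], of e]] e by metis
      have "(if \<alpha> \<in> setA then t - d < t \<and> t < t + d else t \<le> t \<and> t < t + d)" using d by simp
      with H' tT show "?x \<le> e * \<bar>t - bjump T t\<bar> powr \<alpha>" by blast
    qed
    from le_eps_zero[OF this] have "?x \<le> 0" by simp
    then show "f t = f (bjump T t) + frpow \<alpha> (t - bjump T t) * D" by (simp add: algebra_simps)
  qed
  have i: "\<alpha> \<in> setA \<and> left_dense T t \<and> nabla_fdifferentiable T \<alpha> f t
        \<longrightarrow> continuous (at t within T) f"
    using cont_part[of T t \<alpha> f] \<alpha> by (auto simp: left_dense_def nabla_fdifferentiable_def)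
  have ii: "\<alpha> \<notin> setA \<and> left_dense T t \<and> nabla_fdifferentiable T \<alpha> f t
        \<longrightarrow> continuous (at t within (T \<inter> {t..})) f"
    using cont_part[of T t \<alpha> f] \<alpha> by (auto simp: left_dense_def nabla_fdifferentiable_def)
  have iii: "continuous (at t within T) f \<and> left_scattered T t
        \<longrightarrow> has_nabla_fderiv T \<alpha> f t
              ((f t - f (bjump T t)) / frpow \<alpha> (t - bjump T t))"
    using scattered_part[OF tT tk] \<alpha> by (auto simp: left_scattered_def)
  have iv: "\<alpha> \<in> setA \<and> left_dense T t \<longrightarrow>
        (nabla_fdifferentiable T \<alpha> f t \<longleftrightarrow>
           (\<exists>L. ((\<lambda>s. (f s - f t) / frpow \<alpha> (s - t)) \<longlongrightarrow> L) (at t within T)))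
      \<and> (\<forall>D. has_nabla_fderiv T \<alpha> f t D \<longrightarrow>
           ((\<lambda>s. (f s - f t) / frpow \<alpha> (s - t)) \<longlongrightarrow> D) (at t within T))"
    using deriv_limit[OF _ tk \<alpha>(1), of f] by (auto simp: left_dense_def nabla_fdifferentiable_def)
  have v: "\<alpha> \<notin> setA \<and> left_dense T t \<longrightarrow>
        (nabla_fdifferentiable T \<alpha> f t \<longleftrightarrow>
           (\<exists>L. ((\<lambda>s. (f s - f t) / frpow \<alpha> (s - t)) \<longlongrightarrow> L) (at t within (T \<inter> {t<..}))))
      \<and> (\<forall>D. has_nabla_fderiv T \<alpha> f t D \<longrightarrow>
           ((\<lambda>s. (f s - f t) / frpow \<alpha> (s - t)) \<longlongrightarrow> D) (at t within (T \<inter> {t<..})))"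
    using deriv_limit[OF _ tk \<alpha>(1), of f] by (auto simp: left_dense_def nabla_fdifferentiable_def)
  show ?thesis using i ii iii iv v vi by blast
qed

end
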